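(* Let $\Phi:\mathbb{R}^n\to\mathbb{R}$ be convex, of class $C^2$, bounded from below, with Hessian Lipschitz continuous on bounded sets, and let $\alpha,\beta>0$. Consider \[ \ddot x(t)+\alpha\dot x(t)+\beta\nabla^2\Phi(x(t))\dot x(t)+\nabla\Phi(x(t))=0 . \] Let $x(\cdot)$ be a solution on $[0,\infty)$ such that $(x(t),\dot x(t))$ is bounded. Then $\dot x(t)\to0$, $\nabla\Phi(x(t))\to0$, for every $z\in\operatorname{Argmin}\Phi$ the limit $\lim_{t\to\infty}\|x(t)-z\|$ exists, and $x(t)$ converges as $t\to\infty$ to a single point $x^\ast\in\operatorname{Argmin}\Phi$.
   Context: $\operatorname{Argmin}\Phi$ denotes the set of global minimizers of $\Phi$. *)

theory Defs
  imports "HOL-Analysis.Analysis"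
begin

definition Argmin :: "('a \<Rightarrow> real) \<Rightarrow> 'a set" where
  "Argmin \<Phi> = {z. \<forall>y. \<Phi> z \<le> \<Phi> y}"

end

theory Submission
  imports Defs
begin


lemma mono_conv:
  fixes f f' :: "real \<Rightarrow> real"
  assumes d: "\<And>t. t > 0 \<Longrightarrow> (f has_real_derivative f' t) (at t)"
    and n: "\<And>t. t > 0 \<Longrightarrow> f' t \<le> 0"
    and b: "\<And>t. t > 0 \<Longrightarrow> f t \<ge> B"
  shows "\<exists>L. (f \<longlongrightarrow> L) at_top"
proof -
  define L where "L = Inf (f ` {0<..})"
  have bdd: "bdd_below (f ` {0<..})" using b by (auto intro!: bdd_belowI)
  have ne: "f ` {0<..} \<noteq> {}" by auto
  have dec: "f t \<le> f s" if "0 < s" "s \<le> t" for s t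
    proof (rule DERIV_nonpos_imp_nonincreasing[of s t f])
    fix u assume "s \<le> u" "u \<le> t"
    then have "u > 0" using that by linarith
    then show "\<exists>y. (f has_real_derivative y) (at u) \<and> y \<le> 0" using d n by blast
  qed (use that in auto)
  have "(f \<longlongrightarrow> L) at_top"
  proof (rule tendstoI)
    fix e :: real assume e: "e > 0"
    then obtain y where y: "y \<in> f ` {0<..}" "y < L + e"
      using cInf_lessD[OF ne, of "L + e"] unfolding L_def by auto
    then obtain t0 where t0: "t0 > 0" "f t0 < L + e" by auto
    show "\<forall>\<^sub>F t in at_top. dist (f t) L < e"
      unfolding eventually_at_top_linorder
    proof (intro exI allI impI)
      fix t assume "t \<ge> t0"
      then have "f t \<le> f t0" "L \<le> f t" using t0 dec[of t0 t] cInf_lower[OF _ bdd, of "f t"]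
        unfolding L_def by auto
      then show "dist (f t) L < e" using t0 e by (simp add: dist_real_def)
    qed
  qed
  then show ?thesis by blast
qed

lemma decay_lemma:
  fixes W W' g g' :: "real \<Rightarrow> real"
  assumes dW: "\<And>t. t > 0 \<Longrightarrow> (W has_real_derivative W' t) (at t)"
    and W'g: "\<And>t. t > 0 \<Longrightarrow> W' t \<le> - g t"
    and Wb: "\<And>t. t > 0 \<Longrightarrow> W t \<ge> B"
    and gnn: "\<And>t. t > 0 \<Longrightarrow> g t \<ge> 0"
    and dg: "\<And>t. t > 0 \<Longrightarrow> (g has_real_derivative g' t) (at t)"
    and g'b: "\<And>t. t > 0 \<Longrightarrow> \<bar>g' t\<bar> \<le> M"
  shows "(g \<longlongrightarrow> 0) at_top"
proof -
  obtain L where WL: "(W \<longlongrightarrow> L) at_top"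
    using mono_conv[of W W' B] dW Wb W'g gnn by (metis neg_le_0_iff_le order.trans)
  define M' where "M' = max M 1"
  have M'pos: "M' > 0" and M'M: "M \<le> M'" unfolding M'_def by auto
  show ?thesis
  proof (rule tendstoI)
    fix e :: real assume e: "e > 0"
    show "\<forall>\<^sub>F t in at_top. dist (g t) 0 < e"
    proof (rule ccontr)
      assume nev: "\<not> (\<forall>\<^sub>F t in at_top. dist (g t) 0 < e)"
      define \<delta> where "\<delta> = e / (2 * M')"
      have dpos: "\<delta> > 0" unfolding \<delta>_def using e M'pos by auto
      have "\<forall>\<^sub>F t in at_top. dist (W t) L < e * \<delta> / 4"
        using WL e dpos by (intro tendstoD) auto
      then obtain T0 where T0: "\<And>t. t \<ge> T0 \<Longrightarrow> dist (W t) L < e * \<delta> / 4"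
        unfolding eventually_at_top_linorder by blast
      from nev obtain t where t: "t \<ge> max T0 1" "\<not> dist (g t) 0 < e"
        unfolding eventually_at_top_linorder by (meson order.refl)
      have tpos: "t > 0" using t by auto
      have gt: "g t \<ge> e" using t(2) gnn[OF tpos] by (simp add: dist_real_def)
      have glow: "g s \<ge> e / 2" if s: "t \<le> s" "s \<le> t + \<delta>" for s
      proof -
        have "g t + M' * t \<le> g s + M' * s"
        proof (rule DERIV_nonneg_imp_nondecreasing[of t s "\<lambda>u. g u + M' * u"])
          fix u assume u: "t \<le> u" "u \<le> s"
          then have up: "u > 0" using tpos by linarith
          have "((\<lambda>u. g u + M' * u) has_real_derivative g' u + M') (at u)"
            using dg[OF up] by (auto intro!: derivative_eq_intros)
          moreover have "g' u + M' \<ge> 0" using g'b[OF up] M'M by linarith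
          ultimately show "\<exists>y. ((\<lambda>u. g u + M' * u) has_real_derivative y) (at u) \<and> y \<ge> 0"
            by blast
        qed (use s in auto)
        then have "g s \<ge> e - M' * (s - t)" using gt by (simp add: algebra_simps)
        moreover have "M' * (s - t) \<le> M' * \<delta>" using s M'pos by (intro mult_left_mono) auto
        moreover have "M' * \<delta> = e / 2" unfolding \<delta>_def using M'pos by (simp add: field_simps)
        ultimately show ?thesis by linarith
      qed
      have "W (t + \<delta>) + e / 2 * (t + \<delta>) \<le> W t + e / 2 * t"
      proof (rule DERIV_nonpos_imp_nonincreasing[of t "t + \<delta>" "\<lambda>u. W u + e / 2 * u"])
        fix u assume u: "t \<le> u" "u \<le> t + \<delta>"
        then have up: "u > 0" using tpos by linarith
        have "((\<lambda>u. W u + e / 2 * u) has_real_derivative W' u + e / 2) (at u)"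
          using dW[OF up] by (auto intro!: derivative_eq_intros)
        moreover have "W' u + e / 2 \<le> 0" using W'g[OF up] glow[OF u] by linarith
        ultimately show "\<exists>y. ((\<lambda>u. W u + e / 2 * u) has_real_derivative y) (at u) \<and> y \<le> 0"
          by blast
      qed (use dpos in auto)
      then have drop: "W t - W (t + \<delta>) \<ge> e / 2 * \<delta>" by (simp add: field_simps)
      have "dist (W t) L < e * \<delta> / 4" "dist (W (t + \<delta>)) L < e * \<delta> / 4"
        using T0 t dpos by auto
      then show False using drop unfolding dist_real_def by linarith
    qed
  qed
qed


lemma exp_decay: fixes a C :: real assumes "a > 0" shows "((\<lambda>t. C * exp (- a * t)) \<longlongrightarrow> 0) at_top"
proof -
  have "filterlim (\<lambda>t. a * t) at_top at_top"
    by (rule filterlim_tendsto_pos_mult_at_top[OF tendsto_const assms filterlim_ident])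
  then have "((\<lambda>t. exp (- (a * t))) \<longlongrightarrow> 0) at_top"
    by (intro filterlim_compose[OF exp_at_bot] filterlim_compose[OF filterlim_uminus_at_bot_at_top])
  then have "((\<lambda>t. C * exp (- (a * t))) \<longlongrightarrow> C * 0) at_top"
    by (intro tendsto_mult tendsto_const)
  then show ?thesis by simp
qed

lemma ode_lim:
  fixes h h' :: "real \<Rightarrow> real"
  assumes dh: "\<And>t. t > 0 \<Longrightarrow> (h has_real_derivative h' t) (at t)"
    and lim: "((\<lambda>t. h' t + a * h t) \<longlongrightarrow> K) at_top"
    and a: "a > 0"
  shows "(h \<longlongrightarrow> K / a) at_top"
proof (rule tendstoI)
  fix e :: real assume e: "e > 0"
  define m where "m t = h t - K / a" for t
  have "\<forall>\<^sub>F t in at_top. dist (h' t + a * h t) K < a * e / 2"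
    using lim e a by (intro tendstoD) auto
  then obtain T0 where T0: "\<And>t. t \<ge> T0 \<Longrightarrow> \<bar>h' t + a * h t - K\<bar> < a * e / 2"
    unfolding eventually_at_top_linorder dist_real_def by blast
  define T where "T = max T0 1"
  have Tp: "T > 0" "T \<ge> T0" unfolding T_def by auto
  have fb: "\<bar>h' t + a * m t\<bar> < a * e / 2" if "t \<ge> T" for t
    using T0[of t] that Tp a unfolding m_def by (simp add: algebra_simps)
  have dm: "((\<lambda>t. (m t + c) * exp (a * t)) has_real_derivative
      exp (a * t) * (h' t + a * m t + a * c)) (at t)" if "t > 0" for t c
    unfolding m_def using dh[OF that]
    by (auto intro!: derivative_eq_intros simp: algebra_simps)
  have up: "(m t + - (e / 2)) * exp (a * t) \<le> (m T + - (e / 2)) * exp (a * T)" if "t \<ge> T" for t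
  proof (rule DERIV_nonpos_imp_nonincreasing[of T t "\<lambda>t. (m t + - (e/2)) * exp (a * t)"])
    show "T \<le> t" by fact
    fix u assume u: "T \<le> u" "u \<le> t"
    have "h' u + a * m u + a * (- e / 2) \<le> 0" using fb[of u] u by linarith
    then have "exp (a * u) * (h' u + a * m u + a * (- e / 2)) \<le> 0"
      by (simp add: mult_nonneg_nonpos)
    then show "\<exists>y. ((\<lambda>t. (m t + - (e / 2)) * exp (a * t)) has_real_derivative y) (at u) \<and> y \<le> 0"
      using dm[of u "- e / 2"] u Tp by auto
  qed
  have lo: "(m t + e / 2) * exp (a * t) \<ge> (m T + e / 2) * exp (a * T)" if "t \<ge> T" for t
  proof (rule DERIV_nonneg_imp_nondecreasing[of T t "\<lambda>t. (m t + e/2) * exp (a * t)"])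
    show "T \<le> t" by fact
    fix u assume u: "T \<le> u" "u \<le> t"
    have "h' u + a * m u + a * (e / 2) \<ge> 0" using fb[of u] u by linarith
    then have "exp (a * u) * (h' u + a * m u + a * (e / 2)) \<ge> 0"
      by simp
    then show "\<exists>y. ((\<lambda>t. (m t + e / 2) * exp (a * t)) has_real_derivative y) (at u) \<and> y \<ge> 0"
      using dm[of u "e / 2"] u Tp by auto
  qed
  define C where "C = (\<bar>m T\<bar> + e) * exp (a * T)"
  have "\<forall>\<^sub>F t in at_top. dist (C * exp (- a * t)) 0 < e / 2"
    using exp_decay[OF a, of C] e by (intro tendstoD) auto
  then obtain T1 where T1: "\<And>t. t \<ge> T1 \<Longrightarrow> \<bar>C * exp (- a * t)\<bar> < e / 2"
    unfolding eventually_at_top_linorder dist_real_def by auto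
  show "\<forall>\<^sub>F t in at_top. dist (h t) (K / a) < e"
    unfolding eventually_at_top_linorder
  proof (intro exI allI impI)
    fix t assume t: "t \<ge> max T T1"
    have ex: "exp (- a * t) * exp (a * t) = 1" by (simp add: exp_minus field_simps)
    have C1: "\<bar>C * exp (- a * t)\<bar> < e / 2" using T1 t by auto
    have "(m t - e / 2) = (m t - e / 2) * exp (a * t) * exp (- a * t)" using ex by (simp add: mult.commute)
    also have "\<dots> \<le> (m T - e / 2) * exp (a * T) * exp (- a * t)"
      using up[of t] t by (intro mult_right_mono) auto
    also have "\<dots> \<le> C * exp (- a * t)" unfolding C_def
      using e abs_ge_self[of "m T"] by (intro mult_right_mono) auto
    finally have 1: "m t - e / 2 \<le> C * exp (- a * t)" .
    have "(m t + e / 2) = (m t + e / 2) * exp (a * t) * exp (- a * t)" using ex by (simp add: mult.commute)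
    also have "\<dots> \<ge> (m T + e / 2) * exp (a * T) * exp (- a * t)"
      using lo[of t] t by (intro mult_right_mono) auto
    also have "(m T + e / 2) * exp (a * T) * exp (- a * t) \<ge> - C * exp (- a * t)"
    proof -
      have le: "- (\<bar>m T\<bar> + e) \<le> m T + e / 2" using e abs_ge_minus_self[of "m T"] by linarith
      have E: "0 \<le> exp (a * T) * exp (- a * t)" by simp
      have "(- (\<bar>m T\<bar> + e)) * (exp (a * T) * exp (- a * t)) \<le> (m T + e / 2) * (exp (a * T) * exp (- a * t))"
        using mult_right_mono[OF le E] .
      then show ?thesis unfolding C_def by (simp only: mult.assoc mult_minus_left)
    qed
    finally have 2: "m t + e / 2 \<ge> - C * exp (- a * t)" .
    show "dist (h t) (K / a) < e"
      using 1 2 C1 unfolding dist_real_def m_def by (auto simp: abs_less_iff)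
  qed
qed


lemma convex_grad_ineq:
  fixes \<Phi> :: "'n::euclidean_space \<Rightarrow> real" and gradPhi :: "'n \<Rightarrow> 'n"
  assumes convex: "convex_on UNIV \<Phi>"
    and grad: "\<And>y. (\<Phi> has_derivative (\<lambda>h. gradPhi y \<bullet> h)) (at y)"
  shows "\<Phi> w - \<Phi> y \<ge> gradPhi y \<bullet> (w - y)"
proof -
  define d where "d = w - y"
  define g where "g s = \<Phi> (y + s *\<^sub>R d)" for s :: real
  have cg: "convex_on UNIV g"
  proof (rule convex_onI)
    fix t a b :: real assume t: "t > 0" "t < 1"
    have "y + ((1 - t) *\<^sub>R a + t *\<^sub>R b) *\<^sub>R d = (1 - t) *\<^sub>R (y + a *\<^sub>R d) + t *\<^sub>R (y + b *\<^sub>R d)"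
      by (simp add: algebra_simps)
    then show "g ((1 - t) *\<^sub>R a + t *\<^sub>R b) \<le> (1 - t) * g a + t * g b"
      unfolding g_def using convex_onD[OF convex, of t "y + a *\<^sub>R d" "y + b *\<^sub>R d"] t by simp
  qed simp
  have "((\<lambda>s. y + s *\<^sub>R d) has_derivative (\<lambda>h. h *\<^sub>R d)) (at 0)"
    by (auto intro!: derivative_eq_intros)
  from has_derivative_compose[OF this grad]
  have "(g has_derivative (\<lambda>h. gradPhi y \<bullet> (h *\<^sub>R d))) (at 0)"
    unfolding g_def by simp
  then have "(g has_field_derivative (gradPhi y \<bullet> d)) (at 0 within UNIV)"
    by (rule has_derivative_imp_has_field_derivative) simp
  from convex_on_imp_above_tangent[OF cg _ _ _ this, of 1]
  have "g 1 - g 0 \<ge> gradPhi y \<bullet> d" by simp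
  then show ?thesis unfolding g_def d_def by simp
qed


lemma vd_inner:
  assumes "(f has_vector_derivative f') (at t)" "(g has_vector_derivative g') (at t)"
  shows "((\<lambda>s. f s \<bullet> g s) has_real_derivative (f t \<bullet> g' + f' \<bullet> g t)) (at t)"
  using bounded_bilinear.has_vector_derivative[OF bounded_bilinear_inner assms]
  unfolding has_real_derivative_iff_has_vector_derivative .

lemma vd_scale:
  assumes "(f has_vector_derivative f') F"
  shows "((\<lambda>s. c *\<^sub>R f s) has_vector_derivative c *\<^sub>R f') F"
  using bounded_linear.has_vector_derivative[OF bounded_linear_scaleR_right assms] .

theorem mainTheorem12:
  fixes \<Phi> :: "'n::euclidean_space \<Rightarrow> real"
    and gradPhi :: "'n \<Rightarrow> 'n"
    and hessPhi :: "'n \<Rightarrow> ('n \<Rightarrow>\<^sub>L 'n)"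
    and \<alpha> \<beta> :: real
    and x v :: "real \<Rightarrow> 'n"
  assumes convex: "convex_on UNIV \<Phi>"
    and grad: "\<And>y. (\<Phi> has_derivative (\<lambda>h. gradPhi y \<bullet> h)) (at y)"
    and hess: "\<And>y. (gradPhi has_derivative blinfun_apply (hessPhi y)) (at y)"
    and hess_cont: "continuous_on UNIV hessPhi"
    and bdd_below: "bdd_below (range \<Phi>)"
    and hess_lip: "\<And>B. bounded B \<Longrightarrow>
          \<exists>L. \<forall>y\<in>B. \<forall>z\<in>B. norm (hessPhi y - hessPhi z) \<le> L * dist y z"
    and alpha: "\<alpha> > 0" and beta: "\<beta> > 0"
    and dx: "\<And>t. t \<ge> 0 \<Longrightarrow> (x has_vector_derivative v t) (at t within {0..})"
    and dv: "\<And>t. t \<ge> 0 \<Longrightarrow> (v has_vector_derivative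
               (- (\<alpha> *\<^sub>R v t) - \<beta> *\<^sub>R hessPhi (x t) (v t) - gradPhi (x t))) (at t within {0..})"
    and bounded: "bounded ((\<lambda>t. (x t, v t)) ` {0..})"
  shows "(v \<longlongrightarrow> 0) at_top
    \<and> ((\<lambda>t. gradPhi (x t)) \<longlongrightarrow> 0) at_top
    \<and> (\<forall>z\<in>Argmin \<Phi>. \<exists>l. ((\<lambda>t. norm (x t - z)) \<longlongrightarrow> l) at_top)
    \<and> (\<exists>xstar\<in>Argmin \<Phi>. (x \<longlongrightarrow> xstar) at_top)"
proof -
  define G where "G t = gradPhi (x t)" for t
  define Hv where "Hv t = blinfun_apply (hessPhi (x t)) (v t)" for t
  define a where "a t = - (\<alpha> *\<^sub>R v t) - \<beta> *\<^sub>R Hv t - G t" for t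
  have int: "at t within {0..} = at t" if "t > 0" for t :: real
    using that by (intro at_within_interior) auto
  have xd: "(x has_vector_derivative v t) (at t)" if "t > 0" for t
    using dx[of t] int[OF that] that by simp
  have vd: "(v has_vector_derivative a t) (at t)" if "t > 0" for t
    using dv[of t] int[OF that] that unfolding a_def Hv_def G_def by simp
  have Gd: "(G has_vector_derivative Hv t) (at t)" if "t > 0" for t
  proof -
    have "((\<lambda>t. gradPhi (x t)) has_derivative (\<lambda>h. blinfun_apply (hessPhi (x t)) (h *\<^sub>R v t))) (at t)"
      using has_derivative_compose[OF xd[OF that, unfolded has_vector_derivative_def] hess] .
    then show ?thesis unfolding has_vector_derivative_def G_def Hv_def
      by (simp add: blinfun.scaleR_right)
  qed
  have Phid: "((\<lambda>t. \<Phi> (x t)) has_real_derivative (G t \<bullet> v t)) (at t)" if "t > 0" for t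
  proof -
    have "((\<lambda>t. \<Phi> (x t)) has_derivative (\<lambda>h. gradPhi (x t) \<bullet> (h *\<^sub>R v t))) (at t)"
      using has_derivative_compose[OF xd[OF that, unfolded has_vector_derivative_def] grad] .
    then show ?thesis unfolding G_def
      by (rule has_derivative_imp_has_field_derivative) (simp add: algebra_simps)
  qed
  have bx: "bounded (x ` {0..})"
  proof -
    have "x ` {0..} = fst ` ((\<lambda>t. (x t, v t)) ` {0..})" by (simp add: image_image)
    then show ?thesis using bounded_fst[OF bounded] by simp
  qed
  have bv: "bounded (v ` {0..})"
  proof -
    have "v ` {0..} = snd ` ((\<lambda>t. (x t, v t)) ` {0..})" by (simp add: image_image)
    then show ?thesis using bounded_snd[OF bounded] by simp
  qed
  obtain Bx where Bx: "\<And>t. t \<ge> 0 \<Longrightarrow> norm (x t) \<le> Bx"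
    using bx unfolding bounded_iff by auto
  obtain Bv where Bv: "\<And>t. t \<ge> 0 \<Longrightarrow> norm (v t) \<le> Bv"
    using bv unfolding bounded_iff by auto
  define K where "K = closure (x ` {0..})"
  have cK: "compact K" unfolding K_def using bx by simp
  have xK: "x t \<in> K" if "t \<ge> 0" for t
    unfolding K_def using that closure_subset by fastforce
  have cgrad: "continuous_on UNIV gradPhi"
    using hess has_derivative_continuous continuous_at_imp_continuous_on by blast
  have cPhi: "continuous_on UNIV \<Phi>"
    using grad has_derivative_continuous continuous_at_imp_continuous_on by blast
  have "bounded (gradPhi ` K)"
    by (rule compact_imp_bounded[OF compact_continuous_image[OF continuous_on_subset[OF cgrad subset_UNIV] cK]])
  then obtain BG where BG: "\<And>t. t \<ge> 0 \<Longrightarrow> norm (G t) \<le> BG"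
    unfolding bounded_iff G_def using xK by blast
  have "bounded (hessPhi ` K)"
    by (rule compact_imp_bounded[OF compact_continuous_image[OF continuous_on_subset[OF hess_cont subset_UNIV] cK]])
  then obtain BH where BH: "\<And>t. t \<ge> 0 \<Longrightarrow> norm (hessPhi (x t)) \<le> BH"
    unfolding bounded_iff using xK by blast
  have "bounded (\<Phi> ` K)"
    by (rule compact_imp_bounded[OF compact_continuous_image[OF continuous_on_subset[OF cPhi subset_UNIV] cK]])
  then obtain BP where BP: "\<And>t. t \<ge> 0 \<Longrightarrow> \<bar>\<Phi> (x t)\<bar> \<le> BP"
    unfolding bounded_iff using xK by fastforce
  have Bx0: "Bx \<ge> 0" using Bx[of 0] norm_ge_zero[of "x 0"] by linarith
  have Bv0: "Bv \<ge> 0" using Bv[of 0] norm_ge_zero[of "v 0"] by linarith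
  have BG0: "BG \<ge> 0" using BG[of 0] norm_ge_zero[of "G 0"] by linarith
  have BH0: "BH \<ge> 0" using BH[of 0] norm_ge_zero[of "hessPhi (x 0)"] by linarith
  have BHv: "norm (Hv t) \<le> BH * Bv" if "t \<ge> 0" for t
  proof -
    have "norm (Hv t) \<le> norm (hessPhi (x t)) * norm (v t)" unfolding Hv_def by (rule norm_blinfun)
    also have "\<dots> \<le> BH * Bv" using BH[OF that] Bv[OF that] norm_ge_zero[of "hessPhi (x t)"] norm_ge_zero[of "v t"]
      by (intro mult_mono) linarith+
    finally show ?thesis .
  qed
  have Ba: "norm (a t) \<le> \<alpha> * Bv + \<beta> * (BH * Bv) + BG" if "t \<ge> 0" for t
  proof -
    have "norm (a t) \<le> norm (\<alpha> *\<^sub>R v t) + norm (\<beta> *\<^sub>R Hv t) + norm (G t)"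
      unfolding a_def by (metis (no_types, lifting) add_mono diff_conv_add_uminus norm_minus_cancel norm_triangle_ineq order.trans order_refl)
    also have "\<dots> \<le> \<alpha> * Bv + \<beta> * (BH * Bv) + BG"
      using Bv[OF that] BHv[OF that] BG[OF that] alpha beta
      by (intro add_mono) (auto intro: mult_left_mono)
    finally show ?thesis .
  qed
  obtain m where m: "\<And>y. \<Phi> y \<ge> m"
    using bdd_below unfolding bdd_below_def by auto
  define u where "u t = v t + \<beta> *\<^sub>R G t" for t
  have ud: "(u has_vector_derivative (a t + \<beta> *\<^sub>R Hv t)) (at t)" if "t > 0" for t
    unfolding u_def by (intro has_vector_derivative_add vd_scale vd Gd that)
  define W where "W t = (1 + \<alpha> * \<beta>) * \<Phi> (x t) + (u t \<bullet> u t) / 2" for t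
  have Wd: "(W has_real_derivative (- \<alpha> * (v t \<bullet> v t) - \<beta> * (G t \<bullet> G t))) (at t)"
    if "t > 0" for t
  proof -
    have "(W has_real_derivative ((1 + \<alpha> * \<beta>) * (G t \<bullet> v t) +
        (u t \<bullet> (a t + \<beta> *\<^sub>R Hv t) + (a t + \<beta> *\<^sub>R Hv t) \<bullet> u t) / 2)) (at t)"
      unfolding W_def[abs_def]
      by (intro DERIV_add DERIV_cmult DERIV_cdivide Phid vd_inner ud that)
    moreover have "(1 + \<alpha> * \<beta>) * (G t \<bullet> v t) +
        (u t \<bullet> (a t + \<beta> *\<^sub>R Hv t) + (a t + \<beta> *\<^sub>R Hv t) \<bullet> u t) / 2
        = - \<alpha> * (v t \<bullet> v t) - \<beta> * (G t \<bullet> G t)"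
    proof -
      have e1: "a t + \<beta> *\<^sub>R Hv t = - (\<alpha> *\<^sub>R v t) - G t" unfolding a_def by simp
      have e2: "u t \<bullet> (- (\<alpha> *\<^sub>R v t) - G t) = - \<alpha> * (v t \<bullet> v t) - v t \<bullet> G t
          - \<alpha> * \<beta> * (G t \<bullet> v t) - \<beta> * (G t \<bullet> G t)"
        unfolding u_def by (simp add: inner_simps algebra_simps)
      have e3: "(- (\<alpha> *\<^sub>R v t) - G t) \<bullet> u t = u t \<bullet> (- (\<alpha> *\<^sub>R v t) - G t)"
        by (rule inner_commute)
      have e4: "v t \<bullet> G t = G t \<bullet> v t" by (rule inner_commute)
      have half: "\<And>p::real. (p + p) / 2 = p" by simp
      show ?thesis unfolding e1 e3 half e2 e4 by (simp add: algebra_simps)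
    qed
    ultimately show ?thesis by simp
  qed
  have Wb: "W t \<ge> (1 + \<alpha> * \<beta>) * m" if "t > 0" for t
  proof -
    have "(1 + \<alpha> * \<beta>) * m \<le> (1 + \<alpha> * \<beta>) * \<Phi> (x t)"
      using m alpha beta by (intro mult_left_mono) auto
    moreover have "u t \<bullet> u t \<ge> 0" by simp
    ultimately show ?thesis unfolding W_def by linarith
  qed
  have v2: "((\<lambda>t. \<alpha> * (v t \<bullet> v t)) \<longlongrightarrow> 0) at_top"
  proof (rule decay_lemma[where W = W and B = "(1 + \<alpha> * \<beta>) * m"])
    fix t :: real assume t: "t > 0"
    show "(W has_real_derivative (- \<alpha> * (v t \<bullet> v t) - \<beta> * (G t \<bullet> G t))) (at t)" by (rule Wd[OF t])
    show "- \<alpha> * (v t \<bullet> v t) - \<beta> * (G t \<bullet> G t) \<le> - (\<alpha> * (v t \<bullet> v t))"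
      using beta by simp
    show "W t \<ge> (1 + \<alpha> * \<beta>) * m" by (rule Wb[OF t])
    show "\<alpha> * (v t \<bullet> v t) \<ge> 0" using alpha by simp
    show "((\<lambda>t. \<alpha> * (v t \<bullet> v t)) has_real_derivative \<alpha> * (v t \<bullet> a t + a t \<bullet> v t)) (at t)"
      by (intro DERIV_cmult vd_inner vd t)
    have "\<bar>v t \<bullet> a t + a t \<bullet> v t\<bar> \<le> 2 * (norm (v t) * norm (a t))"
      using Cauchy_Schwarz_ineq2[of "v t" "a t"] by (simp add: inner_commute)
    also have "\<dots> \<le> 2 * (Bv * (\<alpha> * Bv + \<beta> * (BH * Bv) + BG))"
      using Bv[of t] Ba[of t] t Bv0 by (intro mult_left_mono mult_mono) auto
    finally show "\<bar>\<alpha> * (v t \<bullet> a t + a t \<bullet> v t)\<bar> \<le> \<alpha> * (2 * (Bv * (\<alpha> * Bv + \<beta> * (BH * Bv) + BG)))"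
      using alpha by (simp add: abs_mult)
  qed
  have G2: "((\<lambda>t. \<beta> * (G t \<bullet> G t)) \<longlongrightarrow> 0) at_top"
  proof (rule decay_lemma[where W = W and B = "(1 + \<alpha> * \<beta>) * m"])
    fix t :: real assume t: "t > 0"
    show "(W has_real_derivative (- \<alpha> * (v t \<bullet> v t) - \<beta> * (G t \<bullet> G t))) (at t)" by (rule Wd[OF t])
    show "- \<alpha> * (v t \<bullet> v t) - \<beta> * (G t \<bullet> G t) \<le> - (\<beta> * (G t \<bullet> G t))"
      using alpha by simp
    show "W t \<ge> (1 + \<alpha> * \<beta>) * m" by (rule Wb[OF t])
    show "\<beta> * (G t \<bullet> G t) \<ge> 0" using beta by simp
    show "((\<lambda>t. \<beta> * (G t \<bullet> G t)) has_real_derivative \<beta> * (G t \<bullet> Hv t + Hv t \<bullet> G t)) (at t)"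
      by (intro DERIV_cmult vd_inner Gd t)
    have "\<bar>G t \<bullet> Hv t + Hv t \<bullet> G t\<bar> \<le> 2 * (norm (G t) * norm (Hv t))"
      using Cauchy_Schwarz_ineq2[of "G t" "Hv t"] by (simp add: inner_commute)
    also have "\<dots> \<le> 2 * (BG * (BH * Bv))"
      using BG[of t] BHv[of t] t BG0 by (intro mult_left_mono mult_mono) auto
    finally show "\<bar>\<beta> * (G t \<bullet> Hv t + Hv t \<bullet> G t)\<bar> \<le> \<beta> * (2 * (BG * (BH * Bv)))"
      using beta by (simp add: abs_mult)
  qed
  have sq0: "(f \<longlongrightarrow> 0) at_top" if "((\<lambda>t. c * (f t \<bullet> f t)) \<longlongrightarrow> 0) at_top" "c > 0"
    for f :: "real \<Rightarrow> 'n" and c :: real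
  proof -
    have "((\<lambda>t. (1 / c) * (c * (f t \<bullet> f t))) \<longlongrightarrow> (1 / c) * 0) at_top"
      by (intro tendsto_mult tendsto_const that)
    then have "((\<lambda>t. f t \<bullet> f t) \<longlongrightarrow> 0) at_top" using that(2) by simp
    then have "((\<lambda>t. sqrt (f t \<bullet> f t)) \<longlongrightarrow> sqrt 0) at_top" by (rule tendsto_real_sqrt)
    then have "((\<lambda>t. norm (f t)) \<longlongrightarrow> 0) at_top" by (simp add: norm_eq_sqrt_inner)
    then show ?thesis by (simp add: tendsto_norm_zero_iff)
  qed
  have v0: "(v \<longlongrightarrow> 0) at_top" by (rule sq0[OF v2 alpha])
  have G0: "(G \<longlongrightarrow> 0) at_top" by (rule sq0[OF G2 beta])
  have WL: "\<exists>L. (W \<longlongrightarrow> L) at_top"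
  proof (rule mono_conv[where f' = "\<lambda>t. - \<alpha> * (v t \<bullet> v t) - \<beta> * (G t \<bullet> G t)"])
    fix t :: real assume t: "t > 0"
    show "(W has_real_derivative (- \<alpha> * (v t \<bullet> v t) - \<beta> * (G t \<bullet> G t))) (at t)" by (rule Wd[OF t])
    show "- \<alpha> * (v t \<bullet> v t) - \<beta> * (G t \<bullet> G t) \<le> 0"
    proof -
      have "0 \<le> \<alpha> * (v t \<bullet> v t)" using alpha by simp
      moreover have "0 \<le> \<beta> * (G t \<bullet> G t)" using beta by simp
      ultimately show ?thesis by linarith
    qed
    show "W t \<ge> (1 + \<alpha> * \<beta>) * m" by (rule Wb[OF t])
  qed
  then obtain LW where LW: "(W \<longlongrightarrow> LW) at_top" by blast
  have zpart: "\<forall>z\<in>Argmin \<Phi>. \<exists>l. ((\<lambda>t. norm (x t - z)) \<longlongrightarrow> l) at_top"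
  proof
    fix z assume z: "z \<in> Argmin \<Phi>"
    then have zmin: "\<And>y. \<Phi> z \<le> \<Phi> y" by (simp add: Argmin_def)
    define q where "q t = (x t - z) \<bullet> G t" for t
    have qge: "q t \<ge> \<Phi> (x t) - \<Phi> z" for t
    proof -
      have "(x t - z) \<bullet> G t = - (G t \<bullet> (z - x t))"
        by (simp add: inner_diff_left inner_diff_right inner_commute)
      then show ?thesis
        using convex_grad_ineq[OF convex grad, where w = z and y = "x t"] unfolding q_def G_def by linarith
    qed
    have Bxz: "norm (x t - z) \<le> Bx + norm z" if "t \<ge> 0" for t
      using norm_triangle_ineq4[of "x t" z] Bx[OF that] by linarith
    have Bu: "norm (u t) \<le> Bv + \<beta> * BG" if "t \<ge> 0" for t
    proof -
      have "norm (u t) \<le> norm (v t) + norm (\<beta> *\<^sub>R G t)" unfolding u_def by (rule norm_triangle_ineq)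
      also have "\<dots> = norm (v t) + \<beta> * norm (G t)" using beta by simp
      also have "\<dots> \<le> Bv + \<beta> * BG" using Bv[OF that] BG[OF that] beta
        by (intro add_mono mult_left_mono) auto
      finally show ?thesis .
    qed
    define h where "h t = (x t - z) \<bullet> (x t - z) / 2" for t
    define P where "P t = (x t - z) \<bullet> u t + \<alpha> * h t - \<beta> * \<Phi> (x t)" for t
    define \<theta> where "\<theta> t = P t + W t / \<alpha>" for t
    have xzd: "((\<lambda>t. x t - z) has_vector_derivative v t) (at t)" if "t > 0" for t
      using has_vector_derivative_diff[OF xd[OF that] has_vector_derivative_const[of z]] by simp
    have hd: "(h has_real_derivative ((x t - z) \<bullet> v t)) (at t)" if "t > 0" for t
    proof -
      have "(h has_real_derivative (((x t - z) \<bullet> v t + v t \<bullet> (x t - z)) / 2)) (at t)"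
        unfolding h_def[abs_def] by (intro DERIV_cdivide vd_inner xzd that)
      then show ?thesis by (simp add: inner_commute)
    qed
    have \<theta>d: "(\<theta> has_real_derivative
        ((x t - z) \<bullet> (a t + \<beta> *\<^sub>R Hv t) + v t \<bullet> u t + \<alpha> * ((x t - z) \<bullet> v t) - \<beta> * (G t \<bullet> v t)
         + (- \<alpha> * (v t \<bullet> v t) - \<beta> * (G t \<bullet> G t)) / \<alpha>)) (at t)" if "t > 0" for t
      unfolding \<theta>_def[abs_def] P_def[abs_def]
      by (intro DERIV_add DERIV_diff DERIV_cmult DERIV_cdivide vd_inner xzd ud hd Phid Wd that)
    have \<theta>neg: "(x t - z) \<bullet> (a t + \<beta> *\<^sub>R Hv t) + v t \<bullet> u t + \<alpha> * ((x t - z) \<bullet> v t) - \<beta> * (G t \<bullet> v t)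
         + (- \<alpha> * (v t \<bullet> v t) - \<beta> * (G t \<bullet> G t)) / \<alpha> \<le> 0" for t
    proof -
      have e1: "a t + \<beta> *\<^sub>R Hv t = - (\<alpha> *\<^sub>R v t) - G t" unfolding a_def by simp
      have f1: "(x t - z) \<bullet> (a t + \<beta> *\<^sub>R Hv t) = - \<alpha> * ((x t - z) \<bullet> v t) - q t"
        unfolding e1 q_def by (simp add: inner_simps algebra_simps)
      have f2: "v t \<bullet> u t = v t \<bullet> v t + \<beta> * (G t \<bullet> v t)"
        unfolding u_def by (simp add: inner_simps inner_commute)
      have f3: "(- \<alpha> * (v t \<bullet> v t) - \<beta> * (G t \<bullet> G t)) / \<alpha> = - (v t \<bullet> v t) - \<beta> * (G t \<bullet> G t) / \<alpha>"
        using alpha by (simp add: field_simps)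
      have f4: "\<beta> * (G t \<bullet> G t) / \<alpha> \<ge> 0" using alpha beta by simp
      have "q t \<ge> 0" using qge[of t] zmin[of "x t"] by linarith
      then show ?thesis unfolding f1 f2 f3 using f4 by linarith
    qed
    have "\<exists>L. (\<theta> \<longlongrightarrow> L) at_top"
    proof (rule mono_conv[OF \<theta>d \<theta>neg])
      fix t :: real assume t: "t > 0"
      have "\<bar>(x t - z) \<bullet> u t\<bar> \<le> norm (x t - z) * norm (u t)" by (rule Cauchy_Schwarz_ineq2)
      also have "\<dots> \<le> (Bx + norm z) * (Bv + \<beta> * BG)"
        using Bxz[of t] Bu[of t] t Bx0 by (intro mult_mono) auto
      finally have 1: "(x t - z) \<bullet> u t \<ge> - ((Bx + norm z) * (Bv + \<beta> * BG))" by linarith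
      have 2: "\<alpha> * h t \<ge> 0" unfolding h_def using alpha by simp
      have 3: "\<beta> * \<Phi> (x t) \<le> \<beta> * BP" using BP[of t] t beta by (intro mult_left_mono) auto
      have 4: "W t / \<alpha> \<ge> (1 + \<alpha> * \<beta>) * m / \<alpha>" using Wb[OF t] alpha by (simp add: divide_right_mono)
      show "\<theta> t \<ge> - ((Bx + norm z) * (Bv + \<beta> * BG)) + 0 - \<beta> * BP + (1 + \<alpha> * \<beta>) * m / \<alpha>"
        unfolding \<theta>_def P_def using 1 2 3 4 by linarith
    qed
    then obtain L\<theta> where L\<theta>: "(\<theta> \<longlongrightarrow> L\<theta>) at_top" by blast
    have q0: "(q \<longlongrightarrow> 0) at_top"
    proof (rule tendsto_0_le[OF G0, where K = "Bx + norm z"])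
      show "\<forall>\<^sub>F t in at_top. norm (q t) \<le> norm (G t) * (Bx + norm z)"
        unfolding eventually_at_top_linorder
      proof (intro exI allI impI)
        fix t :: real assume t: "t \<ge> 0"
        have "norm (q t) \<le> norm (x t - z) * norm (G t)" unfolding q_def real_norm_def
          by (rule Cauchy_Schwarz_ineq2)
        also have "\<dots> \<le> (Bx + norm z) * norm (G t)" using Bxz[OF t] by (intro mult_right_mono) auto
        finally show "norm (q t) \<le> norm (G t) * (Bx + norm z)" by (simp add: mult.commute)
      qed
    qed
    have Phi0: "((\<lambda>t. \<Phi> (x t) - \<Phi> z) \<longlongrightarrow> 0) at_top"
    proof (rule tendsto_0_le[OF q0, where K = 1])
      show "\<forall>\<^sub>F t in at_top. norm (\<Phi> (x t) - \<Phi> z) \<le> norm (q t) * 1"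
        using qge zmin by (auto intro!: always_eventually simp: abs_le_iff intro: order_trans[OF _ abs_ge_self])
    qed
    have "((\<lambda>t. (\<theta> t - W t / \<alpha>) - \<beta> * q t + \<beta> * (\<Phi> (x t) - \<Phi> z) + \<beta> * \<Phi> z)
        \<longlongrightarrow> (L\<theta> - LW / \<alpha>) - \<beta> * 0 + \<beta> * 0 + \<beta> * \<Phi> z) at_top"
      using alpha by (intro tendsto_intros L\<theta> LW q0 Phi0) auto
    moreover have "(\<theta> t - W t / \<alpha>) - \<beta> * q t + \<beta> * (\<Phi> (x t) - \<Phi> z) + \<beta> * \<Phi> z
        = (x t - z) \<bullet> v t + \<alpha> * h t" for t
      unfolding \<theta>_def P_def q_def u_def by (simp add: inner_simps algebra_simps)
    ultimately have "((\<lambda>t. (x t - z) \<bullet> v t + \<alpha> * h t) \<longlongrightarrow> (L\<theta> - LW / \<alpha>) + \<beta> * \<Phi> z) at_top"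
      by simp
    then have hl: "(h \<longlongrightarrow> ((L\<theta> - LW / \<alpha>) + \<beta> * \<Phi> z) / \<alpha>) at_top"
      using ode_lim[where h = h and h' = "\<lambda>t. (x t - z) \<bullet> v t" and a = \<alpha>] hd alpha by blast
    have "((\<lambda>t. sqrt (2 * h t)) \<longlongrightarrow> sqrt (2 * (((L\<theta> - LW / \<alpha>) + \<beta> * \<Phi> z) / \<alpha>))) at_top"
      by (intro tendsto_real_sqrt tendsto_mult tendsto_const hl)
    moreover have "sqrt (2 * h t) = norm (x t - z)" for t
      unfolding h_def by (simp add: norm_eq_sqrt_inner)
    ultimately show "\<exists>l. ((\<lambda>t. norm (x t - z)) \<longlongrightarrow> l) at_top" by auto
  qed
  define xs where "xs n = x (real n)" for n :: nat
  have "bounded (range xs)"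
    by (rule bounded_subset[OF bx]) (auto simp: xs_def)
  then obtain l r where r: "strict_mono (r :: nat \<Rightarrow> nat)" and lr: "((xs \<circ> r) \<longlongrightarrow> l) sequentially"
    using bounded_imp_convergent_subsequence by blast
  define s where "s n = real (r n)" for n
  have s: "filterlim s at_top sequentially"
    unfolding s_def by (rule filterlim_compose[OF filterlim_real_sequentially filterlim_subseq[OF r]])
  have xsl: "((\<lambda>n. x (s n)) \<longlongrightarrow> l) sequentially"
    using lr unfolding s_def xs_def o_def .
  have "((\<lambda>n. G (s n)) \<longlongrightarrow> 0) sequentially"
    by (rule filterlim_compose[OF G0 s])
  moreover have "((\<lambda>n. G (s n)) \<longlongrightarrow> gradPhi l) sequentially"
    unfolding G_def
    by (rule isCont_tendsto_compose[OF has_derivative_continuous[OF hess] xsl])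
  ultimately have gl: "gradPhi l = 0" by (rule LIMSEQ_unique[symmetric])
  have lmin: "l \<in> Argmin \<Phi>"
  proof -
    have "\<Phi> l \<le> \<Phi> y" for y
      using convex_grad_ineq[OF convex grad, where y = l and w = y] gl by simp
    then show ?thesis unfolding Argmin_def by blast
  qed
  then obtain L where L: "((\<lambda>t. norm (x t - l)) \<longlongrightarrow> L) at_top" using zpart by blast
  have "((\<lambda>n. norm (x (s n) - l)) \<longlongrightarrow> L) sequentially"
    by (rule filterlim_compose[OF L s])
  moreover have "((\<lambda>n. norm (x (s n) - l)) \<longlongrightarrow> norm (l - l)) sequentially"
    by (intro tendsto_intros xsl)
  ultimately have "L = norm (l - l)" by (rule LIMSEQ_unique)
  then have "L = 0" by simp
  with L have "((\<lambda>t. x t - l) \<longlongrightarrow> 0) at_top" by (simp add: tendsto_norm_zero_iff)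
  then have "(x \<longlongrightarrow> l) at_top" by (simp add: LIM_zero_iff)
  with lmin have ex: "\<exists>xstar\<in>Argmin \<Phi>. (x \<longlongrightarrow> xstar) at_top" by (rule bexI[rotated])
  have G0': "((\<lambda>t. gradPhi (x t)) \<longlongrightarrow> 0) at_top" using G0 unfolding G_def .
  show ?thesis by (intro conjI v0 G0' zpart ex)

qed

end
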